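(* The set $\mathscr Q=\mathbb Q\cap[0,1]$ is $R$-invariant, i.e. $R(\mathscr Q)\subset\mathscr Q$. The only periodic orbits of $R$ contained in $\mathscr Q$ are $C_0=\{0,2/3\}$ and $C_1=\{1,1/3\}$ (both of period $2$). Moreover $\mathscr Q=\mathscr Q_0\cup\mathscr Q_1$ is a disjoint union, where $\mathscr Q_i$ is the set of $x\in\mathscr Q$ whose forward $R$-orbit contains $C_i$, and both $\mathscr Q_0$ and $\mathscr Q_1$ are dense in $[0,1]$.
   Context: Define $\rho$ on binary words: for $b=b_1b_2\dots$, $\rho(b)$ is obtained by deleting every digit $b_n=0$ and replacing every $b_n=1$ by $0$ if $n$ is odd and by $1$ if $n$ is even. For $x\in(0,1]$ let $\beta(x)$ be the unique binary expansion of $x$ with infinitely many $1$'s. Define $R:[0,1]\to[0,1]$ by $R(0)=2/3$ and, for $x\in(0,1]$, $R(x)=\sum_{n\ge1}c_n2^{-n}$ where $c=\rho(\beta(x))$. *)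

theory Defs
  imports "HOL-Analysis.Analysis" "HOL-Library.Infinite_Set"
begin

text \<open>Binary words are indexed from 0: the word b_1 b_2 ... is represented by
  b :: nat => bool with b i = (b_{i+1} = 1). Hence the paper's position n = i+1
  is odd iff i is even.\<close>

definition bin_val :: "(nat \<Rightarrow> bool) \<Rightarrow> real" where
  "bin_val b = (\<Sum>i. if b i then 1 / 2 ^ Suc i else 0)"

definition beta :: "real \<Rightarrow> (nat \<Rightarrow> bool)" where
  "beta x = (THE b. infinite {i. b i} \<and> (\<lambda>i. if b i then 1 / 2 ^ Suc i else 0) sums x)"

text \<open>rho on infinite words with infinitely many 1's: delete the 0 digits, and
  replace the 1 at (1-based) position n by 0 if n is odd and by 1 if n is even.
  The k-th digit of the result comes from the k-th 1 of b, at 0-based index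
  enumerate {i. b i} k, i.e. 1-based position (that index + 1); it is 1 iff that
  position is even, i.e. iff the 0-based index is odd.\<close>
definition rho :: "(nat \<Rightarrow> bool) \<Rightarrow> (nat \<Rightarrow> bool)" where
  "rho b = (\<lambda>k. odd (enumerate {i. b i} k))"

definition R :: "real \<Rightarrow> real" where
  "R x = (if x = 0 then 2/3 else bin_val (rho (beta x)))"

definition QQ :: "real set" where
  "QQ = {x. x \<in> \<rat> \<and> 0 \<le> x \<and> x \<le> 1}"

definition orbit :: "real \<Rightarrow> real set" where
  "orbit x = {(R ^^ k) x | k. True}"

definition C0 :: "real set" where "C0 = {0, 2/3}"
definition C1 :: "real set" where "C1 = {1, 1/3}"

definition QQ0 :: "real set" where "QQ0 = {x \<in> QQ. C0 \<subseteq> orbit x}"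
definition QQ1 :: "real set" where "QQ1 = {x \<in> QQ. C1 \<subseteq> orbit x}"

end

theory Submission
  imports Defs
begin



definition bt :: "(nat \<Rightarrow> bool) \<Rightarrow> nat \<Rightarrow> real" where
  "bt b i = (if b i then 1 / 2 ^ Suc i else 0)"

definition sh :: "nat \<Rightarrow> (nat \<Rightarrow> bool) \<Rightarrow> (nat \<Rightarrow> bool)" where
  "sh n b = (\<lambda>i. b (i + n))"

lemma bt_nonneg: "0 \<le> bt b i" by (simp add: bt_def)
lemma bt_le: "bt b i \<le> (1/2) ^ Suc i" by (simp add: bt_def power_one_over)


lemma geom_sums: "(\<lambda>i. (1/2::real) ^ Suc i) sums 1"
proof -
  have "(\<lambda>i. (1/2::real) ^ i) sums 2"
    using geometric_sums[of "1/2::real"] by simp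
  hence "(\<lambda>i. (1/2::real) ^ i / 2) sums (2/2)" by (rule sums_divide)
  thus ?thesis by simp
qed

lemma geom_half: "(\<Sum>i. (1/2::real) ^ Suc i) = 1"
  using geom_sums by (simp add: sums_iff)

lemma bt_summable: "summable (bt b)"
proof (rule summable_comparison_test'[of "\<lambda>i. (1/2::real) ^ Suc i" 0])
  show "summable (\<lambda>i. (1/2::real) ^ Suc i)" using geom_sums by (simp add: sums_iff)
  fix n show "norm (bt b n) \<le> (1/2) ^ Suc n" using bt_le[of b n] bt_nonneg[of b n] by simp
qed

lemma bin_val_bt: "bin_val b = suminf (bt b)"
  by (simp add: bin_val_def bt_def[abs_def])

lemma bt_sums: "bt b sums bin_val b"
  using bt_summable by (simp add: bin_val_bt summable_sums)


lemma bin_val_nonneg: "0 \<le> bin_val b"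
  unfolding bin_val_bt by (rule suminf_nonneg[OF bt_summable bt_nonneg])

lemma bin_val_le1: "bin_val b \<le> 1"
proof -
  have "suminf (bt b) \<le> (\<Sum>i. (1/2::real) ^ Suc i)"
    by (rule suminf_le) (use bt_le bt_summable geom_sums in \<open>auto simp: sums_iff\<close>)
  thus ?thesis using geom_half unfolding bin_val_bt by linarith
qed

lemma bin_val_true: "bin_val (\<lambda>_. True) = 1"
  unfolding bin_val_bt bt_def using geom_half by (simp add: power_one_over)

lemma bin_val_false: "bin_val (\<lambda>_. False) = 0"
  unfolding bin_val_bt bt_def by simp

lemma bin_val_pos: "b i \<Longrightarrow> 0 < bin_val b"
  unfolding bin_val_bt
  by (rule suminf_pos2[OF bt_summable bt_nonneg, of _ i]) (simp add: bt_def)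

lemma bin_val_shift:
  "bin_val b = (\<Sum>i<n. bt b i) + bin_val (sh n b) / 2 ^ n"
proof -
  have "suminf (bt b) = (\<Sum>i. bt b (i + n)) + sum (bt b) {..<n}"
    by (rule suminf_split_initial_segment[OF bt_summable])
  moreover have "(\<lambda>i. bt b (i + n)) = (\<lambda>i. bt (sh n b) i / 2 ^ n)"
    by (auto simp: bt_def sh_def power_add fun_eq_iff)
  moreover have "(\<Sum>i. bt (sh n b) i / 2 ^ n) = suminf (bt (sh n b)) / 2 ^ n"
    by (rule suminf_divide[OF bt_summable])
  ultimately show ?thesis by (simp add: bin_val_bt)
qed

lemma bin_val_Suc:
  "bin_val b = (if b 0 then 1/2 else 0) + bin_val (sh 1 b) / 2"
  using bin_val_shift[of b 1] by (simp add: bt_def)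

lemma infinite_sh: "infinite {i. b i} \<Longrightarrow> infinite {i. sh n b i}"
proof
  assume inf: "infinite {i. b i}" and fin: "finite {i. sh n b i}"
  have "{i. b i} \<subseteq> {..<n} \<union> (\<lambda>i. i + n) ` {i. sh n b i}"
  proof
    fix i assume "i \<in> {i. b i}"
    thus "i \<in> {..<n} \<union> (\<lambda>i. i + n) ` {i. sh n b i}"
      by (cases "i < n") (auto simp: sh_def image_iff intro!: exI[of _ "i - n"])
  qed
  moreover have "finite ({..<n} \<union> (\<lambda>i. i + n) ` {i. sh n b i})" using fin by simp
  ultimately show False using inf finite_subset by blast
qed

lemma inf_ex: "infinite {i. b i} \<Longrightarrow> \<exists>i. b i"
  using not_finite_existsD by auto

lemma head_char: "infinite {i. b i} \<Longrightarrow> b 0 = (bin_val b > 1/2)"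
proof -
  assume inf: "infinite {i. b i}"
  have p: "0 < bin_val (sh 1 b)" using inf_ex[OF infinite_sh[OF inf]] bin_val_pos by blast
  have "bin_val (sh 1 b) \<le> 1" by (rule bin_val_le1)
  thus ?thesis using p bin_val_Suc[of b] by auto
qed

lemma sh_sh: "sh 1 (sh n b) = sh (Suc n) b"
  by (auto simp: sh_def fun_eq_iff)

lemma uniq0: "infinite {i. b i} \<Longrightarrow> infinite {i. c i} \<Longrightarrow> bin_val b = bin_val c
   \<Longrightarrow> b 0 = c 0 \<and> bin_val (sh 1 b) = bin_val (sh 1 c)"
proof -
  assume a: "infinite {i. b i}" "infinite {i. c i}" "bin_val b = bin_val c"
  have "b 0 = c 0" using head_char[OF a(1)] head_char[OF a(2)] a(3) by simp
  moreover have "bin_val (sh 1 b) = bin_val (sh 1 c)"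
    using bin_val_Suc[of b] bin_val_Suc[of c] a(3) \<open>b 0 = c 0\<close> by auto
  ultimately show ?thesis by simp
qed

lemma uniq_aux: "infinite {i. b i} \<Longrightarrow> infinite {i. c i} \<Longrightarrow> bin_val b = bin_val c
   \<Longrightarrow> b n = c n"
proof (induction n arbitrary: b c)
  case 0
  then show ?case using uniq0 by blast
next
  case (Suc n)
  have h: "bin_val (sh 1 b) = bin_val (sh 1 c)" using uniq0[OF Suc.prems] by simp
  have "sh 1 b n = sh 1 c n"
    by (rule Suc.IH[OF infinite_sh[OF Suc.prems(1)] infinite_sh[OF Suc.prems(2)] h])
  thus ?case by (simp add: sh_def)
qed

lemma uniq: "infinite {i. b i} \<Longrightarrow> infinite {i. c i} \<Longrightarrow> bin_val b = bin_val c \<Longrightarrow> b = c"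
  using uniq_aux by blast

lemma beta_eq: "infinite {i. b i} \<Longrightarrow> bin_val b = x \<Longrightarrow> beta x = b"
  unfolding beta_def
proof (rule the_equality)
  assume "infinite {i. b i}" "bin_val b = x"
  thus "infinite {i. b i} \<and> (\<lambda>i. if b i then 1 / 2 ^ Suc i else 0) sums x"
    using bt_sums[of b] by (simp add: bt_def[abs_def])
next
  fix c assume "infinite {i. b i}" "bin_val b = x"
    "infinite {i. c i} \<and> (\<lambda>i. if c i then 1 / 2 ^ Suc i else (0::real)) sums x"
  thus "c = b" using uniq[of c b] by (simp add: bin_val_def sums_iff)
qed




definition T :: "real \<Rightarrow> real" where "T r = (if r > 1/2 then 2*r - 1 else 2*r)"
definition gd :: "real \<Rightarrow> nat \<Rightarrow> bool" where "gd x i = ((T^^i) x > 1/2)"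

lemma T_range: "0 < r \<Longrightarrow> r \<le> 1 \<Longrightarrow> 0 < T r \<and> T r \<le> 1"
  by (auto simp: T_def)

lemma Tn_range: "0 < x \<Longrightarrow> x \<le> 1 \<Longrightarrow> 0 < (T^^n) x \<and> (T^^n) x \<le> 1"
  by (induction n) (auto simp: T_range)

lemma gd_partial: "x = (\<Sum>i<n. bt (gd x) i) + (T^^n) x / 2^n"
proof (induction n)
  case 0 then show ?case by simp
next
  case (Suc n)
  define r where "r = (T^^n) x"
  have "r / 2^n = bt (gd x) n + T r / 2^(Suc n)"
    by (auto simp: bt_def gd_def r_def[symmetric] T_def field_simps)
  thus ?case using Suc by (simp add: r_def)
qed

lemma gd_sums: "0 < x \<Longrightarrow> x \<le> 1 \<Longrightarrow> bt (gd x) sums x"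
proof -
  assume x: "0 < x" "x \<le> 1"
  have "(\<lambda>n. (T^^n) x / 2^n) \<longlonglongrightarrow> 0"
  proof (rule tendsto_sandwich[of "\<lambda>_. 0" _ _ "\<lambda>n. (1/2::real)^n"])
    show "\<forall>\<^sub>F n in sequentially. 0 \<le> (T^^n) x / 2^n" using Tn_range[OF x] by (auto intro!: always_eventually less_imp_le)
    show "\<forall>\<^sub>F n in sequentially. (T^^n) x / 2^n \<le> (1/2)^n"
      using Tn_range[OF x] by (auto intro!: always_eventually simp: power_one_over divide_right_mono)
  qed (auto intro: LIMSEQ_realpow_zero)
  hence "(\<lambda>n. x - (T^^n) x / 2^n) \<longlonglongrightarrow> x - 0" by (intro tendsto_intros)
  moreover have "(\<lambda>n. x - (T^^n) x / 2^n) = (\<lambda>n. \<Sum>i<n. bt (gd x) i)"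
    using gd_partial[of x] by (auto simp: fun_eq_iff algebra_simps)
  ultimately show ?thesis by (simp add: sums_def)
qed

lemma gd_inf: "0 < x \<Longrightarrow> x \<le> 1 \<Longrightarrow> infinite {i. gd x i}"
proof
  assume x: "0 < x" "x \<le> 1" and fin: "finite {i. gd x i}"
  then obtain N where N: "\<forall>i\<ge>N. \<not> gd x i"
    by (metis (mono_tags, lifting) finite_nat_set_iff_bounded mem_Collect_eq not_le)
  have k: "(T^^(N+k)) x = 2^k * (T^^N) x" for k
  proof (induction k)
    case 0 then show ?case by simp
  next
    case (Suc k)
    have "\<not> gd x (N+k)" using N by simp
    thus ?case using Suc by (simp add: gd_def T_def)
  qed
  have rN: "0 < (T^^N) x" using Tn_range[OF x] by simp
  obtain k where "1 / (T^^N) x < 2 ^ k" using real_arch_pow[of "2::real"] by auto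
  hence "1 < 2^k * (T^^N) x" using rN by (simp add: field_simps)
  thus False using k[of k] Tn_range[OF x, of "N+k"] by simp
qed

lemma beta_gd: "0 < x \<Longrightarrow> x \<le> 1 \<Longrightarrow> beta x = gd x"
  by (rule beta_eq[OF gd_inf]) (auto simp: bin_val_bt sums_unique[OF gd_sums, symmetric])

lemma beta_props: "0 < x \<Longrightarrow> x \<le> 1 \<Longrightarrow> infinite {i. beta x i} \<and> bin_val (beta x) = x"
  using beta_gd gd_inf gd_sums by (simp add: bin_val_bt sums_iff)

lemma rat_periodic:
  assumes x: "x \<in> \<rat>" "0 < x" "x \<le> 1"
  shows "\<exists>N p. 0 < p \<and> (\<forall>i\<ge>N. beta x (i + p) = beta x i)"
proof -
  obtain a q where q: "0 < q" "x = of_int a / of_int q" using x(1) by (cases rule: Rats_cases') blast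
  define Q where "Q = real_of_int q"
  have Qp: "0 < Q" using q by (simp add: Q_def)
  have int: "(T^^n) x * Q \<in> \<int>" for n
  proof (induction n)
    case 0 then show ?case using Qp by (simp add: q Q_def)
  next
    case (Suc n)
    have "T r * Q \<in> \<int>" if "r * Q \<in> \<int>" for r
    proof -
      have "T r * Q = 2 * (r*Q) - Q \<or> T r * Q = 2 * (r * Q)" by (auto simp: T_def algebra_simps)
      moreover have "Q \<in> \<int>" by (simp add: Q_def)
      moreover have "2 * (r*Q) \<in> \<int>" using that Ints_mult[of 2 "r*Q"] by simp
      ultimately show ?thesis using that by (metis Ints_diff)
    qed
    thus ?case using Suc by simp
  qed
  define A where "A = {r. 0 < r \<and> r \<le> 1 \<and> r * Q \<in> \<int>}"
  have "A \<subseteq> (\<lambda>k. of_int k / Q) ` {0..q}"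
  proof
    fix r assume "r \<in> A"
    hence r: "0 < r" "r \<le> 1" "r * Q \<in> \<int>" by (auto simp: A_def)
    then obtain k where k: "r * Q = of_int k" by (auto elim: Ints_cases)
    have "of_int k \<le> Q" using mult_right_mono[OF r(2), of Q] Qp k by simp
    hence "k \<le> q" by (simp add: Q_def)
    moreover have "0 \<le> k" using k r Qp by (metis less_imp_le of_int_0_le_iff zero_le_mult_iff)
    moreover have "r = of_int k / Q" using k Qp by (simp add: field_simps)
    ultimately show "r \<in> (\<lambda>k. of_int k / Q) ` {0..q}" by auto
  qed
  hence finA: "finite A" by (rule finite_subset) simp
  have rng: "range (\<lambda>n. (T^^n) x) \<subseteq> A" using Tn_range[OF x(2,3)] int by (auto simp: A_def)
  have "\<not> inj (\<lambda>n. (T^^n) x)"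
    using finite_subset[OF rng finA] range_inj_infinite by blast
  then obtain m n where mn: "m \<noteq> n" "(T^^m) x = (T^^n) x" by (auto simp: inj_def)
  then obtain m n where mn: "m < n" "(T^^m) x = (T^^n) x"
    by (metis linorder_neqE_nat)
  have k: "(T^^(m+k)) x = (T^^(n+k)) x" for k
    by (induction k) (use mn in auto)
  show ?thesis
  proof (intro exI conjI allI impI)
    show "0 < n - m" using mn by simp
    fix i assume "m \<le> i"
    then obtain k where i: "i = m + k" using le_Suc_ex by blast
    have "i + (n - m) = n + k" using i mn by simp
    thus "beta x (i + (n - m)) = beta x i"
      using k[of k] by (simp add: beta_gd[OF x(2,3)] gd_def i add.commute)
  qed
qed




definition per :: "(nat \<Rightarrow> bool) \<Rightarrow> nat \<Rightarrow> nat \<Rightarrow> bool" where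
  "per b N p \<longleftrightarrow> 0 < p \<and> (\<forall>i\<ge>N. b (i + p) = b i)"

lemma bt_rat: "bt c i \<in> \<rat>"
  by (simp add: bt_def)

lemma per0_rat: "0 < p \<Longrightarrow> \<forall>i. c (i + p) = c i \<Longrightarrow> bin_val c \<in> \<rat>"
proof -
  assume p: "0 < p" and c: "\<forall>i. c (i + p) = c i"
  have "sh p c = c" using c by (auto simp: sh_def fun_eq_iff)
  hence e: "bin_val c = (\<Sum>i<p. bt c i) + bin_val c / 2^p" using bin_val_shift[of c p] by simp
  define S where "S = (\<Sum>i<p. bt c i)"
  have S: "S \<in> \<rat>" unfolding S_def by (intro Rats_sum bt_rat)
  have "(2::real)^p > 1" using p by (simp add: one_less_power)
  hence ne: "(2::real)^p - 1 \<noteq> 0" by simp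
  have "bin_val c * (2^p - 1) = S * 2^p" using e by (simp add: S_def field_simps)
  hence "bin_val c = S * 2^p / (2^p - 1)" using ne by (simp add: field_simps)
  thus ?thesis using S by simp
qed

lemma per_rat: "per b N p \<Longrightarrow> bin_val b \<in> \<rat>"
proof -
  assume "per b N p"
  hence p: "0 < p" by (simp add: per_def)
  have c: "\<forall>i. sh N b (i + p) = sh N b i"
  proof
    fix i have "b (i + N + p) = b (i + N)" using \<open>per b N p\<close> by (simp add: per_def)
    thus "sh N b (i + p) = sh N b i" by (simp add: sh_def add_ac)
  qed
  have "bin_val (sh N b) \<in> \<rat>" by (rule per0_rat[OF p c])
  moreover have "(\<Sum>i<N. bt b i) \<in> \<rat>" by (intro Rats_sum bt_rat)
  ultimately show ?thesis using bin_val_shift[of b N] by simp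
qed

lemma enum_less_card:
  fixes S :: "nat set"
  assumes S: "infinite S"
  shows "card {i\<in>S. i < enumerate S k} = k"
proof -
  have "{i\<in>S. i < enumerate S k} = enumerate S ` {..<k}"
  proof
    show "{i \<in> S. i < enumerate S k} \<subseteq> enumerate S ` {..<k}"
    proof
      fix i assume i: "i \<in> {i \<in> S. i < enumerate S k}"
      then obtain j where j: "enumerate S j = i" using enumerate_Ex[OF S] by blast
      hence "j < k" using i S by auto
      thus "i \<in> enumerate S ` {..<k}" using j by auto
    qed
    show "enumerate S ` {..<k} \<subseteq> {i \<in> S. i < enumerate S k}"
      using S by (auto intro: enumerate_in_set)
  qed
  moreover have "inj_on (enumerate S) {..<k}" using inj_enumerate[OF S] by (auto simp: inj_on_def)
  ultimately show ?thesis by (simp add: card_image)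
qed

lemma enum_card:
  fixes S :: "nat set"
  assumes S: "infinite S" and s: "s \<in> S"
  shows "enumerate S (card {i\<in>S. i < s}) = s"
  using enumerate_Ex[OF S s] enum_less_card[OF S] by auto

definition cb :: "(nat \<Rightarrow> bool) \<Rightarrow> nat \<Rightarrow> nat" where
  "cb b n = card {i. i < n \<and> b i}"

lemma cb_0[simp]: "cb b 0 = 0" by (simp add: cb_def)

lemma cb_Suc: "cb b (Suc n) = cb b n + (if b n then 1 else 0)"
proof -
  have "{i. i < Suc n \<and> b i} = {i. i < n \<and> b i} \<union> (if b n then {n} else {})"
    by (auto simp: less_Suc_eq)
  thus ?thesis by (simp add: cb_def)
qed

lemma cb_bounds: "cb b a \<le> cb b (a + d) \<and> cb b (a + d) \<le> cb b a + d"
  by (induction d) (auto simp: cb_Suc)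

lemma cb_mono: "m \<le> n \<Longrightarrow> cb b m \<le> cb b n"
  using cb_bounds[of b m "n - m"] by simp

lemma cb_le: "cb b n \<le> n"
  using cb_bounds[of b 0 n] by simp

lemma cb_const: "(\<forall>i. a \<le> i \<and> i < a + d \<longrightarrow> \<not> b i) \<Longrightarrow> cb b (a + d) = cb b a"
  by (induction d) (auto simp: cb_Suc)

lemma cb_full: "(\<forall>i. a \<le> i \<and> i < a + d \<longrightarrow> b i) \<Longrightarrow> cb b (a + d) = cb b a + d"
  by (induction d) (auto simp: cb_Suc)

lemma cb_set: "{i\<in>{i. b i}. i < s} = {i. i < s \<and> b i}" by auto

definition cnt :: "(nat \<Rightarrow> bool) \<Rightarrow> nat \<Rightarrow> nat \<Rightarrow> nat" where
  "cnt b s p = cb b (s + p) - cb b s"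

lemma cnt_le: "cnt b s p \<le> p"
  using cb_bounds[of b s p] unfolding cnt_def by linarith

lemma cb_per:
  assumes pb: "per b N p" and s: "N \<le> s"
  shows "cb b (s + p) = cb b s + cnt b N p"
  using s
proof (induction s rule: dec_induct)
  case base then show ?case using cb_bounds[of b N p] unfolding cnt_def by linarith
next
  case (step s)
  have "b (s + p) = b s" using pb step.hyps by (simp add: per_def)
  thus ?case using step.IH by (cases "b s") (simp_all add: cb_Suc)
qed

lemma cnt_per:
  assumes "per b N p" "N \<le> s" shows "cnt b s p = cnt b N p"
proof -
  have "cb b (s + p) = cb b s + cnt b N p" by (rule cb_per[OF assms])
  thus ?thesis unfolding cnt_def[of b s p] by simp
qed

lemma cnt_zero: "per b N p \<Longrightarrow> cnt b N p = 0 \<Longrightarrow> N \<le> i \<Longrightarrow> \<not> b i"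
proof
  assume a: "per b N p" "cnt b N p = 0" "N \<le> i" "b i"
  have "cb b (i + p) = cb b i" using cb_per[OF a(1,3)] a(2) by simp
  moreover have "cb b (Suc i) \<le> cb b (i + p)" using a(1) by (intro cb_mono) (simp add: per_def)
  ultimately show False using a(4) by (simp add: cb_Suc)
qed

lemma cnt_full: "per b N p \<Longrightarrow> cnt b N p = p \<Longrightarrow> N \<le> i \<Longrightarrow> b i"
proof (rule ccontr)
  assume a: "per b N p" "cnt b N p = p" "N \<le> i" "\<not> b i"
  have 1: "cb b (i + p) = cb b i + p" using cb_per[OF a(1,3)] a(2) by simp
  have 2: "cb b (Suc i + (p - 1)) \<le> cb b (Suc i) + (p - 1)" using cb_bounds by blast
  have 3: "Suc i + (p - 1) = i + p" using a(1) by (simp add: per_def)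
  have 4: "cb b (Suc i) = cb b i" using a(4) by (simp add: cb_Suc)
  have "0 < p" using a(1) by (simp add: per_def)
  thus False using 1 2 3 4 by simp
qed

lemma cnt_pos: "per b N p \<Longrightarrow> infinite {i. b i} \<Longrightarrow> 1 \<le> cnt b N p"
proof (rule ccontr)
  assume a: "per b N p" "infinite {i. b i}" "\<not> 1 \<le> cnt b N p"
  hence "\<forall>i\<ge>N. \<not> b i" using cnt_zero[OF a(1)] by simp
  hence "{i. b i} \<subseteq> {..<N}" using not_le by blast
  thus False using a(2) finite_subset by blast
qed

lemma cnt_pos_inf: "per b N p \<Longrightarrow> 1 \<le> cnt b N p \<Longrightarrow> infinite {i. b i}"
proof -
  assume a: "per b N p" "1 \<le> cnt b N p"
  have "\<exists>n\<ge>m. n \<in> {i. b i}" for m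
  proof (rule ccontr)
    assume "\<not> (\<exists>n\<ge>m. n \<in> {i. b i})"
    hence "cb b (max m N + p) = cb b (max m N)" by (intro cb_const) auto
    moreover have "cb b (max m N + p) = cb b (max m N) + cnt b N p" by (rule cb_per[OF a(1)]) simp
    ultimately show False using a(2) by simp
  qed
  thus ?thesis unfolding infinite_nat_iff_unbounded_le by (rule allI)
qed


lemma enum_shift:
  assumes inf: "infinite {i. b i}" and pb: "per b N p" and k: "cb b N \<le> k"
  shows "enumerate {i. b i} (k + cnt b N p) = enumerate {i. b i} k + p"
proof -
  define S where "S = {i. b i}"
  define s where "s = enumerate S k"
  have sS: "b s" using enumerate_in_set[OF inf] by (simp add: s_def S_def)
  have cs: "cb b s = k" using enum_less_card[OF inf, of k] unfolding cb_def s_def S_def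
    by (simp add: conj_commute)
  have sN: "N \<le> s"
  proof (rule ccontr)
    assume "\<not> N \<le> s"
    hence "cb b (Suc s) \<le> cb b N" by (intro cb_mono) simp
    thus False using k cs sS by (simp add: cb_Suc)
  qed
  have "cb b (s + p) = k + cnt b N p" using cb_per[OF pb sN] cs by simp
  moreover have "b (s + p)" using pb sN sS by (simp add: per_def)
  ultimately have "enumerate S (k + cnt b N p) = s + p"
    using enum_card[OF inf, of "s + p"] unfolding cb_def S_def by (simp add: conj_commute)
  thus ?thesis by (simp add: s_def S_def)
qed

lemma rho_shift:
  assumes inf: "infinite {i. b i}" and pb: "per b N p" and k: "cb b N \<le> k"
  shows "rho b (k + cnt b N p) = (if even p then rho b k else \<not> rho b k)"
  using enum_shift[OF assms] by (simp add: rho_def)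

lemma rho_per_even:
  assumes inf: "infinite {i. b i}" and pb: "per b N p" and ev: "even p"
  shows "per (rho b) (cb b N) (cnt b N p)"
  using rho_shift[OF inf pb] ev cnt_pos[OF pb inf] by (simp add: per_def)

lemma rho_per_odd:
  assumes inf: "infinite {i. b i}" and pb: "per b N p" and od: "odd p"
  shows "per (rho b) (cb b N) (2 * cnt b N p) \<and> cnt (rho b) (cb b N) (2 * cnt b N p) = cnt b N p"
proof -
  define K where "K = cnt b N p"
  define c where "c = cb b N"
  define r where "r = rho b"
  have sh: "\<And>k. c \<le> k \<Longrightarrow> r (k + K) = (\<not> r k)"
    using rho_shift[OF inf pb] od by (simp add: K_def c_def r_def)
  have pr: "per r c (2 * K)"
    unfolding per_def
  proof (intro conjI allI impI)
    show "0 < 2 * K" using cnt_pos[OF pb inf] by (simp add: K_def)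
    fix i assume "c \<le> i"
    thus "r (i + 2 * K) = r i" using sh[of i] sh[of "i + K"] by (simp add: mult_2 add.assoc)
  qed
  have j: "cb r (c + K + j) + cb r (c + j) = cb r (c + K) + cb r c + j" for j
  proof (induction j)
    case 0 then show ?case by simp
  next
    case (Suc j)
    have "r (c + K + j) = (\<not> r (c + j))" using sh[of "c + j"] by (simp add: add_ac)
    thus ?case using Suc by (cases "r (c + j)") (simp_all add: cb_Suc)
  qed
  have "cb r (c + 2 * K) = cb r c + K" using j[of K] by (simp add: mult_2 add_ac)
  hence "cnt r c (2 * K) = K" by (simp add: cnt_def)
  thus ?thesis using pr by (simp add: K_def c_def r_def)
qed




lemma R_pos: "0 < x \<Longrightarrow> R x = bin_val (rho (beta x))"
  by (simp add: R_def)

lemma next_beta: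
  assumes "0 < x" "infinite {i. rho (beta x) i}"
  shows "beta (R x) = rho (beta x) \<and> 0 < R x \<and> R x \<le> 1"
proof -
  have "beta (R x) = rho (beta x)" using beta_eq[OF assms(2)] R_pos[OF assms(1)] by simp
  moreover have "0 < R x" using inf_ex[OF assms(2)] bin_val_pos R_pos[OF assms(1)] by metis
  ultimately show ?thesis using bin_val_le1 R_pos[OF assms(1)] by simp
qed

lemma cnt1: "cnt b s 1 = (if b s then 1 else 0)"
  by (simp add: cnt_def cb_Suc)

lemma cnt1': "cnt b s (Suc 0) = (if b s then 1 else 0)"
  by (simp add: cnt_def cb_Suc)

lemma reexp:
  assumes w: "\<forall>i\<ge>c. \<not> w i"
  shows "bin_val w = 0 \<or> (\<exists>j<c. 0 < bin_val w \<and> (\<forall>i\<ge>Suc j. beta (bin_val w) i))"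
proof (cases "\<exists>i<c. w i")
  case False
  hence "w = (\<lambda>_. False)" using w by (auto simp: fun_eq_iff not_less[symmetric])
  thus ?thesis by (simp add: bin_val_false)
next
  case True
  define j where "j = Max {i. i < c \<and> w i}"
  have fin: "finite {i. i < c \<and> w i}" by simp
  have jin: "j \<in> {i. i < c \<and> w i}" unfolding j_def using True by (intro Max_in fin) auto
  have jmax: "\<And>i. j < i \<Longrightarrow> \<not> w i"
  proof -
    fix i assume "j < i"
    show "\<not> w i"
    proof (cases "i < c")
      case True
      show ?thesis
      proof
        assume "w i"
        hence "i \<le> j" unfolding j_def using True by (intro Max_ge fin) auto
        thus False using \<open>j < i\<close> by simp
      qed
    next
      case False thus ?thesis using w by simp
    qed
  qed
  define w' where "w' = (\<lambda>i. if i < j then w i else j < i)"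
  have s1: "(\<Sum>i<Suc j. bt w i) = (\<Sum>i<j. bt w i) + 1 / 2 ^ Suc j" using jin by (simp add: bt_def)
  have s2: "(\<Sum>i<Suc j. bt w' i) = (\<Sum>i<j. bt w i)" by (simp add: bt_def w'_def)
  have h1: "sh (Suc j) w = (\<lambda>_. False)" using jmax by (auto simp: sh_def fun_eq_iff)
  have h2: "sh (Suc j) w' = (\<lambda>_. True)" by (auto simp: sh_def fun_eq_iff w'_def)
  have eq: "bin_val w' = bin_val w"
    using bin_val_shift[of w "Suc j"] bin_val_shift[of w' "Suc j"] s1 s2 h1 h2
    by (simp add: bin_val_true bin_val_false)
  have "{Suc j..} \<subseteq> {i. w' i}" by (auto simp: w'_def)
  hence inf: "infinite {i. w' i}" using infinite_Ici finite_subset by metis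
  have "beta (bin_val w) = w'" using beta_eq[OF inf eq] .
  moreover have "0 < bin_val w" using jin bin_val_pos by blast
  ultimately show ?thesis using jin by (intro disjI2 exI[of _ j]) (auto simp: w'_def)
qed

definition reach :: "real \<Rightarrow> bool" where
  "reach x \<longleftrightarrow> (\<exists>k. (R^^k) x \<in> C0 \<union> C1)"

lemma reach_R: "reach (R x) \<Longrightarrow> reach x"
  unfolding reach_def by (metis funpow_Suc_right o_apply)

definition mu :: "nat \<Rightarrow> nat \<Rightarrow> nat \<Rightarrow> nat \<times> nat" where
  "mu N p K = (K, if K = 1 then (if p = 1 then 2*N else if even p then 2*N+1 else 2*N+2)
                 else if odd p then 1 else 0)"

definition rel :: "((nat \<times> nat) \<times> (nat \<times> nat)) set" where
  "rel = less_than <*lex*> less_than"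

lemma wf_rel: "wf rel" unfolding rel_def by (intro wf_lex_prod wf_less_than)

lemma rel_iff: "((a, b), (c, d)) \<in> rel \<longleftrightarrow> a < c \<or> a = c \<and> b < d"
  by (simp add: rel_def)

lemma main_aux:
  "\<forall>x N p. mu N p (cnt (beta x) N p) = m \<longrightarrow> 0 < x \<longrightarrow> x \<le> 1 \<longrightarrow> per (beta x) N p \<longrightarrow> reach x"
proof (induction m rule: wf_induct_rule[OF wf_rel])
  case (1 m)
  show ?case
  proof (intro allI impI)
    fix x N p
    assume mm: "mu N p (cnt (beta x) N p) = m" and x: "0 < x" "x \<le> 1" and pb: "per (beta x) N p"
    define b where "b = beta x"
    have inf: "infinite {i. b i}" using beta_props[OF x] by (simp add: b_def)
    define K where "K = cnt b N p"
    define c where "c = cb b N"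
    define r where "r = rho b"
    have pb': "per b N p" using pb by (simp add: b_def)
    have K1: "1 \<le> K" using cnt_pos[OF pb' inf] by (simp add: K_def)
    have m: "m = mu N p K" using mm by (simp add: K_def b_def)
    have cN: "c \<le> N" using cb_le by (simp add: c_def)
    have go: "reach x" if "per r c' p'" "1 \<le> cnt r c' p'" "(mu c' p' (cnt r c' p'), m) \<in> rel" for c' p'
    proof -
      have ri: "infinite {i. r i}" by (rule cnt_pos_inf[OF that(1,2)])
      have nb: "beta (R x) = r \<and> 0 < R x \<and> R x \<le> 1" using next_beta[OF x(1)] ri by (simp add: r_def b_def)
      have "reach (R x)" using 1[OF that(3)] nb that(1) by auto
      thus ?thesis by (rule reach_R)
    qed
    have zero: "reach x" if "\<forall>i\<ge>c'. \<not> r i" "\<And>j. j < c' \<Longrightarrow> (mu (Suc j) 1 1, m) \<in> rel" for c'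
    proof -
      have Rx: "R x = bin_val r" using R_pos[OF x(1)] by (simp add: r_def b_def)
      from reexp[OF that(1)] show ?thesis
      proof
        assume "bin_val r = 0"
        hence "(R^^1) x \<in> C0" using Rx by (simp add: C0_def)
        thus ?thesis unfolding reach_def by blast
      next
        assume "\<exists>j<c'. 0 < bin_val r \<and> (\<forall>i\<ge>Suc j. beta (bin_val r) i)"
        then obtain j where j: "j < c'" "0 < bin_val r" "\<forall>i\<ge>Suc j. beta (bin_val r) i" by blast
        have p1: "per (beta (R x)) (Suc j) 1" using j(3) Rx by (simp add: per_def)
        have c1: "cnt (beta (R x)) (Suc j) 1 = 1" using j(3) Rx by (simp add: cnt1 cnt1')
        have H: "mu (Suc j) 1 (cnt (beta (R x)) (Suc j) 1) = mu (Suc j) 1 1 \<longrightarrow> 0 < R x \<longrightarrow> R x \<le> 1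
            \<longrightarrow> per (beta (R x)) (Suc j) 1 \<longrightarrow> reach (R x)"
          using 1[OF that(2)[OF j(1)]] by blast
        have "reach (R x)" using H p1 c1 j(2) Rx bin_val_le1[of r] by simp
        thus ?thesis by (rule reach_R)
      qed
    qed
    have ones: "reach x" if "\<forall>i\<ge>c'. r i" "(mu c' 1 1, m) \<in> rel" for c'
    proof -
      have "per r c' 1" using that(1) by (simp add: per_def)
      moreover have "cnt r c' 1 = 1" using that(1) by (simp add: cnt1 cnt1')
      ultimately show ?thesis using go[of c' 1] that(2) by simp
    qed
    show "reach x"
    proof (cases "K = 1")
      case False
      hence K2: "2 \<le> K" using K1 by simp
      show ?thesis
      proof (cases "even p")
        case False
        have "per r c (2 * K) \<and> cnt r c (2 * K) = K"
          using rho_per_odd[OF inf pb' False] by (simp add: r_def c_def K_def)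
        thus ?thesis using go[of c "2*K"] K2 False m by (simp add: mu_def rel_iff)
      next
        case True
        have pr: "per r c K" using rho_per_even[OF inf pb' True] by (simp add: r_def c_def K_def)
        have le: "cnt r c K \<le> K" by (rule cnt_le)
        consider "cnt r c K = 0" | "cnt r c K = K" | "1 \<le> cnt r c K" "cnt r c K < K"
          using le by linarith
        thus ?thesis
        proof cases
          case 1
          thus ?thesis using zero[of c] cnt_zero[OF pr 1] K2 m by (simp add: mu_def rel_iff)
        next
          case 2
          thus ?thesis using ones[of c] cnt_full[OF pr 2] K2 m by (simp add: mu_def rel_iff)
        next
          case 3
          thus ?thesis using go[OF pr 3(1)] m by (simp add: mu_def rel_iff)
        qed
      qed
    next
      case True
      show ?thesis
      proof (cases "p = 1")
        case p1: True
        have allb: "\<forall>i\<ge>N. b i" using cnt_full[OF pb'] True p1 by (simp add: K_def)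
        show ?thesis
        proof (cases "N = 0")
          case True
          hence "b = (\<lambda>_. True)" using allb by auto
          hence "x = 1" using beta_props[OF x] by (simp add: b_def bin_val_true)
          hence "(R^^0) x \<in> C1" by (simp add: C1_def)
          thus ?thesis unfolding reach_def by blast
        next
          case N0: False
          show ?thesis
          proof (cases "b (N - 1)")
            case True
            have "\<forall>i\<ge>N - 1. b i"
            proof (intro allI impI)
              fix i assume "N - 1 \<le> i"
              show "b i" proof (cases "i = N - 1")
                case True thus ?thesis using \<open>b (N - 1)\<close> by simp
              next
                case False thus ?thesis using allb \<open>N - 1 \<le> i\<close> by simp
              qed
            qed
            hence p': "per (beta x) (N - 1) 1" by (simp add: per_def b_def)
            have c': "cnt (beta x) (N - 1) 1 = 1" using True by (simp add: cnt1 cnt1' b_def)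
            have "(mu (N - 1) 1 1, m) \<in> rel" using m p1 \<open>K = 1\<close> N0 by (simp add: mu_def rel_iff)
            hence H: "mu (N - 1) 1 (cnt (beta x) (N - 1) 1) = mu (N - 1) 1 1 \<longrightarrow> 0 < x \<longrightarrow> x \<le> 1
              \<longrightarrow> per (beta x) (N - 1) 1 \<longrightarrow> reach x" using 1 by blast
            show ?thesis using H p' c' x by simp
          next
            case False
            have "cb b N = cb b (N - 1)" using False N0 cb_Suc[of b "N - 1"] by simp
            hence cl: "c < N" using cb_le[of b "N - 1"] N0 by (simp add: c_def)
            have "per r c 2 \<and> cnt r c 2 = 1"
              using rho_per_odd[OF inf pb'] p1 True by (simp add: r_def c_def K_def)
            thus ?thesis using go[of c 2] cl m p1 True by (simp add: mu_def rel_iff)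
          qed
        qed
      next
        case pn1: False
        show ?thesis
        proof (cases "even p")
          case ev: True
          have pr: "per r c 1" using rho_per_even[OF inf pb' ev] True by (simp add: r_def c_def K_def)
          have "cnt r c 1 = 0 \<or> cnt r c 1 = 1" by (simp add: cnt1 cnt1')
          thus ?thesis
          proof
            assume z: "cnt r c 1 = 0"
            show ?thesis
              using zero[of c] cnt_zero[OF pr z] cN m True pn1 ev by (simp add: mu_def rel_iff)
          next
            assume o: "cnt r c 1 = 1"
            show ?thesis
              using ones[of c] cnt_full[OF pr o] cN m True pn1 ev by (simp add: mu_def rel_iff)
          qed
        next
          case od: False
          have "per r c 2 \<and> cnt r c 2 = 1"
            using rho_per_odd[OF inf pb' od] True by (simp add: r_def c_def K_def)
          thus ?thesis using go[of c 2] cN m pn1 True od by (simp add: mu_def rel_iff)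
        qed
      qed
    qed
  qed
qed

lemma main: "0 < x \<Longrightarrow> x \<le> 1 \<Longrightarrow> per (beta x) N p \<Longrightarrow> reach x"
  using main_aux by blast




lemma bin_val_per2: "\<forall>i. c (i + 2) = c i \<Longrightarrow> bin_val c = 4/3 * (\<Sum>i<2. bt c i)"
proof -
  assume c: "\<forall>i. c (i + 2) = c i"
  have "sh 2 c = c" using c by (auto simp: sh_def fun_eq_iff)
  hence "bin_val c = (\<Sum>i<2. bt c i) + bin_val c / 4" using bin_val_shift[of c 2] by simp
  thus ?thesis by simp
qed

lemma sum2: "(\<Sum>i<2. bt c i) = bt c 0 + bt c 1"
  by (simp add: numeral_2_eq_2)

lemma bv_even: "bin_val (\<lambda>i. even i) = 2/3"
proof -
  have "\<forall>i. even (i + 2) = even (i::nat)" by simp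
  from bin_val_per2[OF this] have "bin_val (\<lambda>i. even i) = 4/3 * (bt (\<lambda>i. even i) 0 + bt (\<lambda>i. even i) 1)"
    unfolding sum2 .
  thus ?thesis by (simp add: bt_def)
qed

lemma bv_odd: "bin_val (\<lambda>i. odd i) = 1/3"
proof -
  have "\<forall>i. odd (i + 2) = odd (i::nat)" by simp
  from bin_val_per2[OF this] have "bin_val (\<lambda>i. odd i) = 4/3 * (bt (\<lambda>i. odd i) 0 + bt (\<lambda>i. odd i) 1)"
    unfolding sum2 .
  thus ?thesis by (simp add: bt_def)
qed

lemma inf_even: "infinite {i::nat. even i}"
  unfolding infinite_nat_iff_unbounded_le by (metis dvd_triv_left le_add2 mem_Collect_eq mult_2)

lemma inf_odd: "infinite {i::nat. odd i}"
  unfolding infinite_nat_iff_unbounded_le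
  by (metis dvd_triv_left even_Suc le_add2 le_SucI mem_Collect_eq mult_2)

lemma enum_UNIV: "enumerate (UNIV::nat set) k = k"
proof -
  have "card {i\<in>(UNIV::nat set). i < k} = k" by simp
  thus ?thesis using enum_card[of "UNIV::nat set" k] by simp
qed

lemma enum_even: "enumerate {i::nat. even i} k = 2 * k"
proof -
  have "{i\<in>{i::nat. even i}. i < 2 * k} = (\<lambda>j. 2 * j) ` {..<k}" by (auto elim!: evenE)
  hence "card {i\<in>{i::nat. even i}. i < 2 * k} = k" by (simp add: card_image inj_on_def)
  thus ?thesis using enum_card[OF inf_even, of "2 * k"] by simp
qed

lemma enum_odd: "enumerate {i::nat. odd i} k = 2 * k + 1"
proof -
  have "{i\<in>{i::nat. odd i}. i < 2 * k + 1} = (\<lambda>j. 2 * j + 1) ` {..<k}" by (auto elim!: oddE)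
  hence "card {i\<in>{i::nat. odd i}. i < 2 * k + 1} = k" by (simp add: card_image inj_on_def)
  thus ?thesis using enum_card[OF inf_odd, of "2 * k + 1"] by simp
qed

lemma beta_23: "beta (2/3) = (\<lambda>i. even i)"
  using beta_eq[OF inf_even bv_even] .
lemma beta_13: "beta (1/3) = (\<lambda>i. odd i)"
  using beta_eq[OF inf_odd bv_odd] .
lemma beta_1: "beta 1 = (\<lambda>i. True)"
  using beta_eq[of "\<lambda>i. True"] bin_val_true by simp

lemma R_0: "R 0 = 2/3" by (simp add: R_def)
lemma R_23: "R (2/3) = 0"
proof -
  have "rho (\<lambda>i. even i) = (\<lambda>_. False)" by (simp add: rho_def enum_even fun_eq_iff)
  thus ?thesis by (simp add: R_def beta_23 bin_val_false)
qed
lemma R_1: "R 1 = 1/3"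
proof -
  have "rho (\<lambda>i. True) = (\<lambda>i. odd i)" by (simp add: rho_def enum_UNIV fun_eq_iff)
  thus ?thesis by (simp add: R_def beta_1 bv_odd)
qed
lemma R_13: "R (1/3) = 1"
proof -
  have "rho (\<lambda>i. odd i) = (\<lambda>_. True)" by (simp add: rho_def enum_odd fun_eq_iff)
  thus ?thesis by (simp add: R_def beta_13 bin_val_true)
qed

lemma C0_step: "y \<in> C0 \<Longrightarrow> R y \<in> C0"
  unfolding C0_def by (metis R_0 R_23 insertCI insertE singletonD)
lemma C1_step: "y \<in> C1 \<Longrightarrow> R y \<in> C1"
  unfolding C1_def by (metis R_1 R_13 insertCI insertE singletonD)
lemma C0_inv: "z \<in> C0 \<Longrightarrow> (R^^k) z \<in> C0"
  by (induction k) (auto intro: C0_step)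
lemma C1_inv: "z \<in> C1 \<Longrightarrow> (R^^k) z \<in> C1"
  by (induction k) (auto intro: C1_step)

lemma orbit_C0: "z \<in> C0 \<Longrightarrow> orbit z = C0"
proof
  assume z: "z \<in> C0"
  show "orbit z \<subseteq> C0" using C0_inv[OF z] by (auto simp: orbit_def)
  have "z \<in> orbit z" by (auto simp: orbit_def intro: exI[of _ 0])
  moreover have "R z \<in> orbit z" by (auto simp: orbit_def intro!: exI[of _ 1])
  moreover have "C0 = {z, R z}" using z unfolding C0_def by (metis R_0 R_23 insert_commute insertE singletonD)
  ultimately show "C0 \<subseteq> orbit z" by auto
qed

lemma orbit_C1: "z \<in> C1 \<Longrightarrow> orbit z = C1"
proof
  assume z: "z \<in> C1"
  show "orbit z \<subseteq> C1" using C1_inv[OF z] by (auto simp: orbit_def)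
  have "z \<in> orbit z" by (auto simp: orbit_def intro: exI[of _ 0])
  moreover have "R z \<in> orbit z" by (auto simp: orbit_def intro!: exI[of _ 1])
  moreover have "C1 = {z, R z}" using z unfolding C1_def by (metis R_1 R_13 insert_commute insertE singletonD)
  ultimately show "C1 \<subseteq> orbit z" by auto
qed

lemma orbit_sub: "orbit ((R^^k) x) \<subseteq> orbit x"
proof
  fix y assume "y \<in> orbit ((R^^k) x)"
  then obtain j where "y = (R^^j) ((R^^k) x)" by (auto simp: orbit_def)
  hence "y = (R^^(j + k)) x" by (simp add: funpow_add)
  thus "y \<in> orbit x" by (auto simp: orbit_def)
qed

lemma orbit_R: "orbit (R x) \<subseteq> orbit x"
  using orbit_sub[of 1 x] by simp

lemma reach_orbit: "reach x \<Longrightarrow> C0 \<subseteq> orbit x \<or> C1 \<subseteq> orbit x"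
proof -
  assume "reach x"
  then obtain k where "(R^^k) x \<in> C0 \<union> C1" by (auto simp: reach_def)
  thus ?thesis using orbit_C0 orbit_C1 orbit_sub[of k x] by blast
qed

lemma QQ_split: "QQ \<subseteq> QQ0 \<union> QQ1"
proof
  fix x assume x: "x \<in> QQ"
  show "x \<in> QQ0 \<union> QQ1"
  proof (cases "x = 0")
    case True
    thus ?thesis using x orbit_C0[of 0] by (simp add: QQ0_def C0_def)
  next
    case False
    hence x': "x \<in> \<rat>" "0 < x" "x \<le> 1" using x by (auto simp: QQ_def)
    obtain N p where "0 < p" "\<forall>i\<ge>N. beta x (i + p) = beta x i" using rat_periodic[OF x'] by blast
    hence "per (beta x) N p" by (simp add: per_def)
    hence "reach x" using main x' by blast
    thus ?thesis using reach_orbit x by (auto simp: QQ0_def QQ1_def)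
  qed
qed

lemma orbit_mem: "y \<in> orbit x \<longleftrightarrow> (\<exists>k. y = (R^^k) x)"
  by (auto simp: orbit_def)

lemma QQ_disj: "QQ0 \<inter> QQ1 = {}"
proof (rule ccontr)
  assume "QQ0 \<inter> QQ1 \<noteq> {}"
  then obtain x where "C0 \<subseteq> orbit x" "C1 \<subseteq> orbit x" by (auto simp: QQ0_def QQ1_def)
  then obtain a b where a: "0 = (R^^a) x" and b: "1 = (R^^b) x"
    by (auto simp: C0_def C1_def orbit_mem)
  have "(R^^b) ((R^^a) x) \<in> C0" using C0_inv[of "(R^^a) x" b] a[symmetric] by (simp add: C0_def)
  moreover have "(R^^a) ((R^^b) x) \<in> C1" using C1_inv[of "(R^^b) x" a] b[symmetric] by (simp add: C1_def)
  moreover have "(R^^b) ((R^^a) x) = (R^^a) ((R^^b) x)"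
    by (metis add.commute comp_apply funpow_add)
  ultimately show False by (auto simp: C0_def C1_def)
qed

lemma iter_per: "(R^^p) x = x \<Longrightarrow> (R^^(p * a)) x = x"
  by (induction a) (auto simp: funpow_add)

lemma periodic_orbit:
  assumes x: "x \<in> QQ" and p: "1 \<le> p" and px: "(R^^p) x = x"
  shows "orbit x = C0 \<or> orbit x = C1"
proof -
  have "x \<in> QQ0 \<or> x \<in> QQ1" using QQ_split x by auto
  thus ?thesis
  proof
    assume "x \<in> QQ0"
    then obtain a where a: "(R^^a) x \<in> C0" by (auto simp: QQ0_def C0_def orbit_mem)
    have "1 * a \<le> p * a" using p by (rule mult_le_mono1)
    hence "p * a = (p * a - a) + a" by simp
    hence "x = (R^^(p * a - a)) ((R^^a) x)" using iter_per[OF px, of a] by (metis comp_apply funpow_add)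
    hence "x \<in> C0" using C0_inv[OF a, of "p * a - a"] by metis
    thus ?thesis using orbit_C0 by simp
  next
    assume "x \<in> QQ1"
    then obtain a where a: "(R^^a) x \<in> C1" by (auto simp: QQ1_def C1_def orbit_mem)
    have "1 * a \<le> p * a" using p by (rule mult_le_mono1)
    hence "p * a = (p * a - a) + a" by simp
    hence "x = (R^^(p * a - a)) ((R^^a) x)" using iter_per[OF px, of a] by (metis comp_apply funpow_add)
    hence "x \<in> C1" using C1_inv[OF a, of "p * a - a"] by metis
    thus ?thesis using orbit_C1 by simp
  qed
qed

lemma R_QQ: "R ` QQ \<subseteq> QQ"
proof
  fix z assume "z \<in> R ` QQ"
  then obtain x where x: "x \<in> QQ" "z = R x" by blast
  show "z \<in> QQ"
  proof (cases "x = 0")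
    case True
    have "R 0 \<in> QQ" by (simp add: R_0 QQ_def)
    thus ?thesis using x True by simp
  next
    case False
    hence x': "x \<in> \<rat>" "0 < x" "x \<le> 1" using x by (auto simp: QQ_def)
    define b where "b = beta x"
    have inf: "infinite {i. b i}" using beta_props[OF x'(2,3)] by (simp add: b_def)
    obtain N p where "0 < p" "\<forall>i\<ge>N. beta x (i + p) = beta x i" using rat_periodic[OF x'] by blast
    hence pb: "per b N p" by (simp add: per_def b_def)
    have "bin_val (rho b) \<in> \<rat>"
    proof (cases "even p")
      case True thus ?thesis using per_rat[OF rho_per_even[OF inf pb True]] by blast
    next
      case False thus ?thesis using per_rat rho_per_odd[OF inf pb False] by blast
    qed
    moreover have "z = bin_val (rho b)" using x R_pos[OF x'(2)] by (simp add: b_def)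
    ultimately show ?thesis using bin_val_nonneg bin_val_le1 by (simp add: QQ_def)
  qed
qed




primrec posf :: "(nat \<Rightarrow> bool) \<Rightarrow> nat \<Rightarrow> nat \<Rightarrow> nat" where
  "posf e n 0 = n + (if odd n = e 0 then 0 else 1)"
| "posf e n (Suc k) = posf e n k + (if e (Suc k) = e k then 2 else 1)"

lemma posf_odd: "odd (posf e n k) = e k"
  by (induction k) auto

lemma posf_ge: "n \<le> posf e n k"
  by (induction k) auto

lemma posf_mono: "strict_mono (posf e n)"
  by (rule strict_mono_Suc_iff[THEN iffD2]) auto

lemma posf_per:
  assumes pe: "per e N1 p" and k: "N1 \<le> k"
  shows "posf e n (k + p) = posf e n k + (posf e n (N1 + p) - posf e n N1)"
  using k
proof (induction k rule: dec_induct)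
  case base
  have "posf e n N1 \<le> posf e n (N1 + p)" using posf_mono[of e n] by (simp add: strict_mono_less_eq)
  thus ?case by simp
next
  case (step k)
  have h: "\<forall>i\<ge>N1. e (i + p) = e i" using pe by (simp add: per_def)
  have "e (Suc k + p) = e (Suc k)" by (rule h[rule_format]) (use step.hyps(1) in simp)
  moreover have "e (k + p) = e k" by (rule h[rule_format]) (use step.hyps(1) in simp)
  ultimately show ?case using step.IH by simp
qed

lemma enum_agree:
  assumes i1: "infinite {i. b1 i}" and i2: "infinite {i. b2 i}" and ag: "\<forall>i<n. b1 i = b2 i"
    and k: "k < cb b1 n"
  shows "enumerate {i. b1 i} k = enumerate {i. b2 i} k"
proof -
  define s where "s = enumerate {i. b1 i} k"
  have bs: "b1 s" using enumerate_in_set[OF i1] by (simp add: s_def)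
  have cs: "cb b1 s = k" using enum_less_card[OF i1, of k] unfolding cb_def s_def by (simp add: conj_commute)
  have sn: "s < n"
  proof (rule ccontr)
    assume "\<not> s < n"
    hence "cb b1 n \<le> cb b1 s" by (intro cb_mono) simp
    thus False using k cs by simp
  qed
  have "{i. i < s \<and> b2 i} = {i. i < s \<and> b1 i}" using ag sn by auto
  hence c2: "card {i \<in> {i. b2 i}. i < s} = k" using cs unfolding cb_def by (simp add: conj_commute)
  have "b2 s" using ag sn bs by simp
  hence "enumerate {i. b2 i} k = s" using enum_card[OF i2, of s] c2 by simp
  thus ?thesis by (simp add: s_def)
qed

lemma dens_aux:
  assumes base: "\<exists>z\<in>QQ. 0 < z \<and> C \<subseteq> orbit z"
  shows "\<forall>n u. 2*n + (if \<forall>i<n. u i then 1 else 0) = m \<longrightarrow>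
           (\<exists>x\<in>QQ. 0 < x \<and> (\<forall>i<n. beta x i = u i) \<and> C \<subseteq> orbit x)"
proof (induction m rule: less_induct)
  case (less m)
  show ?case
  proof (intro allI impI)
    fix n u assume m: "2*n + (if \<forall>i<n. u i then 1 else 0) = m"
    show "\<exists>x\<in>QQ. 0 < x \<and> (\<forall>i<n. beta x i = u i) \<and> C \<subseteq> orbit x"
    proof (cases "n = 0")
      case True thus ?thesis using base by auto
    next
      case n0: False
      define u' where "u' = (\<lambda>i. if i < n then u i else True)"
      have "{n..} \<subseteq> {i. u' i}" by (auto simp: u'_def)
      hence inf': "infinite {i. u' i}" using infinite_Ici finite_subset by metis
      define mm where "mm = cb u' n"
      define w where "w = rho u'"
      have dec: "2*mm + (if \<forall>i<mm. w i then 1 else 0) < m"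
      proof (cases "\<forall>i<n. u i")
        case False
        then obtain i where i: "i < n" "\<not> u i" by auto
        have "cb u' (Suc i) = cb u' i" using i by (simp add: cb_Suc u'_def)
        moreover have "cb u' (Suc i + (n - Suc i)) \<le> cb u' (Suc i) + (n - Suc i)" using cb_bounds by blast
        moreover have "cb u' i \<le> i" by (rule cb_le)
        ultimately have "mm < n" using i by (simp add: mm_def)
        thus ?thesis using m False by simp
      next
        case True
        have "cb u' (0 + n) = cb u' 0 + n" by (rule cb_full) (use True in \<open>simp add: u'_def\<close>)
        hence mmn: "mm = n" by (simp add: mm_def)
        have "{i. u' i} = UNIV" using True by (auto simp: u'_def)
        hence "\<not> w 0" by (simp add: w_def rho_def enum_UNIV)
        hence "\<not> (\<forall>i<mm. w i)" using mmn n0 by auto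
        thus ?thesis using m True mmn by simp
      qed
      obtain y where y: "y \<in> QQ" "0 < y" "\<forall>i<mm. beta y i = w i" "C \<subseteq> orbit y"
        using less[OF dec] by blast
      have y': "y \<in> \<rat>" "y \<le> 1" using y(1) by (auto simp: QQ_def)
      define d where "d = beta y"
      have dprops: "infinite {i. d i}" "bin_val d = y" using beta_props[OF y(2) y'(2)] by (auto simp: d_def)
      obtain N0 p where p: "0 < p" "\<forall>i\<ge>N0. d (i + p) = d i"
        using rat_periodic[OF y'(1) y(2) y'(2)] by (auto simp: d_def)
      define e where "e = (\<lambda>k. d (mm + k))"
      define N1 where "N1 = N0 - mm"
      have pe: "per e N1 p" using p by (auto simp: per_def e_def N1_def add.assoc[symmetric])
      define pos where "pos = posf e n"
      define b where "b = (\<lambda>i. (i < n \<and> u i) \<or> (\<exists>k. pos k = i))"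
      have pos_ge: "\<And>k. n \<le> pos k" by (simp add: pos_def posf_ge)
      have smp: "strict_mono pos" by (simp add: pos_def posf_mono)
      have npos: "\<And>i k. i < n \<Longrightarrow> pos k \<noteq> i" using pos_ge by (metis not_le)
      have agree: "\<forall>i<n. b i = u' i" using npos by (auto simp: b_def u'_def)
      have agree2: "\<forall>i<n. b i = u i" using agree by (simp add: u'_def)
      have "range pos \<subseteq> {i. b i}" by (auto simp: b_def)
      moreover have "infinite (range pos)" using smp range_inj_infinite strict_mono_imp_inj_on by blast
      ultimately have infb: "infinite {i. b i}" using finite_subset by blast
      have "{i. i < n \<and> b i} = {i. i < n \<and> u' i}" using agree by auto
      hence cbb: "cb b n = mm" unfolding mm_def cb_def by simp
      have rb: "rho b = d"
      proof
        fix k show "rho b k = d k"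
        proof (cases "k < mm")
          case True
          have "enumerate {i. b i} k = enumerate {i. u' i} k"
            by (rule enum_agree[OF infb inf' agree]) (use True cbb in simp)
          hence "rho b k = w k" by (simp add: rho_def w_def)
          thus ?thesis using y(3) True by (simp add: d_def)
        next
          case False
          then obtain j where kj: "k = mm + j" using le_Suc_ex not_less by blast
          have "{i \<in> {i. b i}. i < pos j} = {i. i < n \<and> u i} \<union> pos ` {..<j}"
          proof (rule set_eqI, rule iffI)
            fix i assume "i \<in> {i \<in> {i. b i}. i < pos j}"
            hence h: "(i < n \<and> u i) \<or> (\<exists>k. pos k = i)" and ij: "i < pos j" by (auto simp: b_def)
            show "i \<in> {i. i < n \<and> u i} \<union> pos ` {..<j}"
            proof (cases "i < n \<and> u i")
              case True thus ?thesis by simp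
            next
              case False
              then obtain k where k: "pos k = i" using h by blast
              hence "k < j" using ij smp by (metis strict_mono_less)
              thus ?thesis using k by blast
            qed
          next
            fix i assume "i \<in> {i. i < n \<and> u i} \<union> pos ` {..<j}"
            thus "i \<in> {i \<in> {i. b i}. i < pos j}"
            proof
              assume "i \<in> {i. i < n \<and> u i}"
              thus ?thesis using pos_ge[of j] by (auto simp: b_def)
            next
              assume "i \<in> pos ` {..<j}"
              thus ?thesis using smp by (auto simp: b_def strict_mono_less)
            qed
          qed
          moreover have "{i. i < n \<and> u i} \<inter> pos ` {..<j} = {}" using npos by auto
          moreover have "card (pos ` {..<j}) = j"
            using strict_mono_imp_inj_on[OF smp] by (simp add: card_image inj_on_subset)
          moreover have "{i. i < n \<and> u i} = {i. i < n \<and> u' i}" by (auto simp: u'_def)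
          hence "card {i. i < n \<and> u i} = mm" unfolding mm_def cb_def by simp
          ultimately have "card {i \<in> {i. b i}. i < pos j} = mm + j"
            by (simp add: card_Un_disjoint)
          moreover have "b (pos j)" by (auto simp: b_def)
          ultimately have "enumerate {i. b i} (mm + j) = pos j" using enum_card[OF infb, of "pos j"] by simp
          hence "rho b k = e j" by (simp add: rho_def kj pos_def posf_odd)
          thus ?thesis by (simp add: e_def kj)
        qed
      qed
      define D where "D = pos (N1 + p) - pos N1"
      have posp: "\<And>k. N1 \<le> k \<Longrightarrow> pos (k + p) = pos k + D"
        unfolding D_def pos_def by (rule posf_per[OF pe])
      have Dpos: "0 < D" using smp p(1) by (simp add: D_def strict_mono_less)
      have pb: "per b (pos N1) D"
        unfolding per_def
      proof (intro conjI allI impI)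
        show "0 < D" by (rule Dpos)
        fix i assume i: "pos N1 \<le> i"
        have in1: "\<not> i < n" "\<not> i + D < n" using i pos_ge[of N1] by auto
        have "(\<exists>k. pos k = i + D) = (\<exists>k. pos k = i)"
        proof
          assume "\<exists>k. pos k = i + D"
          then obtain k where k: "pos k = i + D" by blast
          have "pos (N1 + p) \<le> pos k" using k i posp[of N1] by simp
          hence "N1 + p \<le> k" using smp by (metis strict_mono_less_eq)
          define k' where "k' = k - p"
          have k': "k = k' + p" "N1 \<le> k'" using \<open>N1 + p \<le> k\<close> by (auto simp: k'_def)
          hence "pos k' = i" using k posp[of k'] by simp
          thus "\<exists>k. pos k = i" by blast
        next
          assume "\<exists>k. pos k = i"
          then obtain k where k: "pos k = i" by blast
          hence "N1 \<le> k" using i smp by (metis strict_mono_less_eq)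
          hence "pos (k + p) = i + D" using posp k by simp
          thus "\<exists>k. pos k = i + D" by blast
        qed
        thus "b (i + D) = b i" using in1 by (simp add: b_def)
      qed
      define x where "x = bin_val b"
      have xq: "x \<in> \<rat>" using per_rat[OF pb] by (simp add: x_def)
      have xpos: "0 < x" using inf_ex[OF infb] bin_val_pos by (auto simp: x_def)
      have x1: "x \<le> 1" by (simp add: x_def bin_val_le1)
      have bx: "beta x = b" using beta_eq[OF infb] by (simp add: x_def)
      have Rx: "R x = y" using R_pos[OF xpos] bx rb dprops by simp
      have "C \<subseteq> orbit x" using y(4) orbit_R[of x] Rx by auto
      moreover have "x \<in> QQ" using xq xpos x1 by (simp add: QQ_def)
      ultimately show ?thesis using xpos bx agree2 by auto
    qed
  qed
qed

lemma agree_close: "\<forall>i<n. a1 i = a2 i \<Longrightarrow> \<bar>bin_val a1 - bin_val a2\<bar> \<le> 1 / 2^n"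
proof -
  assume ag: "\<forall>i<n. a1 i = a2 i"
  have "(\<Sum>i<n. bt a1 i) = (\<Sum>i<n. bt a2 i)" using ag by (auto simp: bt_def intro!: sum.cong)
  hence "bin_val a1 - bin_val a2 = (bin_val (sh n a1) - bin_val (sh n a2)) / 2^n"
    using bin_val_shift[of a1 n] bin_val_shift[of a2 n] by (simp add: diff_divide_distrib)
  moreover have "\<bar>bin_val (sh n a1) - bin_val (sh n a2)\<bar> \<le> 1"
    using bin_val_nonneg[of "sh n a1"] bin_val_nonneg[of "sh n a2"] bin_val_le1[of "sh n a1"] bin_val_le1[of "sh n a2"]
    by linarith
  ultimately show ?thesis by (simp add: divide_right_mono)
qed

lemma dense:
  assumes base: "\<exists>z\<in>QQ. 0 < z \<and> C \<subseteq> orbit z"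
  shows "{0..1} \<subseteq> closure {x \<in> QQ. C \<subseteq> orbit x}"
proof
  fix y :: real assume y: "y \<in> {0..1}"
  show "y \<in> closure {x \<in> QQ. C \<subseteq> orbit x}"
    unfolding closure_approachable
  proof (intro allI impI)
    fix ep :: real assume ep: "0 < ep"
    obtain n where n: "(1/2::real)^n < ep" using real_arch_pow_inv[OF ep, of "1/2"] by auto
    define a where "a = (if 0 < y then beta y else (\<lambda>_. False))"
    have ay: "bin_val a = y" using y beta_props[of y] by (auto simp: a_def bin_val_false)
    obtain x where x: "x \<in> QQ" "0 < x" "\<forall>i<n. beta x i = a i" "C \<subseteq> orbit x"
      using dens_aux[OF base] by blast
    have "\<bar>bin_val (beta x) - bin_val a\<bar> \<le> 1/2^n" by (rule agree_close[OF x(3)])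
    moreover have "bin_val (beta x) = x" using beta_props[OF x(2)] x(1) by (simp add: QQ_def)
    ultimately have "dist x y \<le> (1/2)^n" using ay by (simp add: dist_real_def power_one_over)
    thus "\<exists>x'\<in>{x \<in> QQ. C \<subseteq> orbit x}. dist x' y < ep" using x n by auto
  qed
qed



theorem proposition6p3:
  shows "R ` QQ \<subseteq> QQ
    \<and> (R 0 = 2/3 \<and> R (2/3) = 0 \<and> R 1 = 1/3 \<and> R (1/3) = 1)
    \<and> (\<forall>x p. x \<in> QQ \<and> orbit x \<subseteq> QQ \<and> p \<ge> (1::nat) \<and> (R ^^ p) x = x
           \<longrightarrow> orbit x = C0 \<or> orbit x = C1)
    \<and> QQ = QQ0 \<union> QQ1
    \<and> QQ0 \<inter> QQ1 = {}
    \<and> {0..1} \<subseteq> closure QQ0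
    \<and> {0..1} \<subseteq> closure QQ1"
proof -
  have q23: "(2/3::real) \<in> QQ" by (simp add: QQ_def)
  have q1: "(1::real) \<in> QQ" by (simp add: QQ_def)
  have b0: "\<exists>z\<in>QQ. 0 < z \<and> C0 \<subseteq> orbit z"
    using q23 orbit_C0[of "2/3"] by (intro bexI[of _ "2/3"]) (auto simp: C0_def)
  have b1: "\<exists>z\<in>QQ. 0 < z \<and> C1 \<subseteq> orbit z"
    using q1 orbit_C1[of 1] by (intro bexI[of _ 1]) (auto simp: C1_def)
  have d0: "{0..1} \<subseteq> closure QQ0" using dense[OF b0] by (simp add: QQ0_def)
  have d1: "{0..1} \<subseteq> closure QQ1" using dense[OF b1] by (simp add: QQ1_def)
  have eq: "QQ = QQ0 \<union> QQ1" using QQ_split by (auto simp: QQ0_def QQ1_def)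
  have per: "\<forall>x p. x \<in> QQ \<and> orbit x \<subseteq> QQ \<and> p \<ge> (1::nat) \<and> (R ^^ p) x = x
           \<longrightarrow> orbit x = C0 \<or> orbit x = C1"
    using periodic_orbit by blast
  show ?thesis using R_QQ R_0 R_23 R_1 R_13 per eq QQ_disj d0 d1 by blast
qed

end
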